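(* There exist dimensions $D_1,D_2\ge1$, data points, a bandwidth $\sigma>0$, a query index $i$, candidate sets $S_1(i),S_2(i)$ and $S(i)=S_1(i)\cup S_2(i)$, and indices $j\ne k$ in $S(i)$ with the following properties: - $k\notin\mathcal{N}_1(i)$ and $k\notin\mathcal{N}_2(i)$; - $j$ eliminates $k$ in channel 1 but not in channel 2, i.e., $K^{(1)}_{ik}<K^{(1)}_{ij}K^{(1)}_{jk}$ and $K^{(2)}_{ik}>K^{(2)}_{ij}K^{(2)}_{jk}$; - nevertheless, $k\in\mathcal{N}(i)$. In other words, a point that is not an NNK neighbor of $x_i$ in any channel, but is not eliminated by the same point in all channels, can be an NNK neighbor in the aggregate space.
   Context: Data and channels: $x_1,\dots,x_N\in\mathbb{R}^{D}$, each written as $x_a=\begin{bmatrix}x_a^{(1)}\\ x_a^{(2)}\end{bmatrix}$ with $x_a^{(1)}\in\mathbb{R}^{D_1}$, $x_a^{(2)}\in\mathbb{R}^{D_2}$, $D_1+D_2=D$. Kernel values: - Channel kernel: for $c=1,2$, $K^{(c)}_{ab}=\exp\!\big(-\|x_a^{(c)}-x_b^{(c)}\|^2/(2\sigma^2)\big)$. - Aggregate kernel: $K_{ab}=\exp\!\big(-\|x_a-x_b\|^2/(2\sigma^2)\big)=K^{(1)}_{ab}K^{(2)}_{ab}$. $K$-nearest-neighbor candidate set: for channel $c$, $S_c(i)\subseteq\{1,\dots,N\}\setminus\{i\}$ with $|S_c(i)|=K$ and $\|x_i^{(c)}-x_l^{(c)}\|\le\|x_i^{(c)}-x_m^{(c)}\|$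 for all $l\in S_c(i)$ and all $m\notin S_c(i)\cup\{i\}$. NNK neighborhood: given a query $i$, a candidate set $S$ and kernel values $(K_{ab})$, it is $$\{\,j\in S:\ K_{ij}>K_{ik}K_{jk}\ \text{for every }k\in S\setminus\{j\}\,\}.$$ A candidate $k$ is eliminated by $j$ when $K_{ik}<K_{ij}K_{jk}$. This is the kernel-ratio-interval criterion, equivalent to $\theta_k=0$ in the two-candidate non-negative kernel regression problem over $\{j,k\}$. Notation: - $\mathcal{N}_c(i)$ is the NNK neighborhood computed with $S_c(i)$ and $K^{(c)}$. - $\mathcal{N}(i)$ is the NNK neighborhood computed with $S(i)$ and $K$. *)

theory Defs
  imports Complex_Main
begin

text \<open>Vectors in R^D are represented as functions nat => real, only coordinates t < D matter.\<close>

definition sqdist :: "nat \<Rightarrow> (nat \<Rightarrow> real) \<Rightarrow> (nat \<Rightarrow> real) \<Rightarrow> real" where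
  "sqdist D u v = (\<Sum>t<D. (u t - v t)^2)"

definition edist :: "nat \<Rightarrow> (nat \<Rightarrow> real) \<Rightarrow> (nat \<Rightarrow> real) \<Rightarrow> real" where
  "edist D u v = sqrt (sqdist D u v)"

definition gkernel :: "real \<Rightarrow> nat \<Rightarrow> (nat \<Rightarrow> nat \<Rightarrow> real) \<Rightarrow> nat \<Rightarrow> nat \<Rightarrow> real" where
  "gkernel \<sigma> D x a b = exp (- ((edist D (x a) (x b))^2) / (2 * \<sigma>^2))"

definition concat_data :: "nat \<Rightarrow> (nat \<Rightarrow> nat \<Rightarrow> real) \<Rightarrow> (nat \<Rightarrow> nat \<Rightarrow> real) \<Rightarrow> nat \<Rightarrow> nat \<Rightarrow> real" where
  "concat_data D1 x1 x2 a t = (if t < D1 then x1 a t else x2 a (t - D1))"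

definition knn_cand :: "nat \<Rightarrow> nat \<Rightarrow> (nat \<Rightarrow> nat \<Rightarrow> real) \<Rightarrow> nat \<Rightarrow> nat \<Rightarrow> nat set \<Rightarrow> bool" where
  "knn_cand N D x K i S \<longleftrightarrow>
     S \<subseteq> {..<N} - {i} \<and> card S = K \<and>
     (\<forall>l\<in>S. \<forall>m\<in>{..<N} - (S \<union> {i}). edist D (x i) (x l) \<le> edist D (x i) (x m))"

definition nnk :: "(nat \<Rightarrow> nat \<Rightarrow> real) \<Rightarrow> nat \<Rightarrow> nat set \<Rightarrow> nat set" where
  "nnk Kv i S = {j\<in>S. \<forall>k\<in>S - {j}. Kv i j > Kv i k * Kv j k}"

end

theory Submission
  imports Defs
begin

lemma gk1: "gkernel 1 D x a b = exp (- sqdist D (x a) (x b) / 2)"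
  unfolding gkernel_def edist_def
  by (simp add: sqdist_def sum_nonneg)

lemma ed: "edist D u v = sqrt (sqdist D u v)" by (simp add: edist_def)

definition X1 :: "nat \<Rightarrow> nat \<Rightarrow> real" where "X1 a t = (if a = 0 then 0 else if a = 1 then 1 else if a = 2 then 2 else (10::real))"
definition X2 :: "nat \<Rightarrow> nat \<Rightarrow> real" where "X2 a t = (if a = 0 then 0 else if a = 1 then -10 else if a = 2 then 2 else (1::real))"

lemma lt4: "{..<4::nat} = {0,1,2,3}" by auto

theorem lemma1:
  shows "\<exists>(D1::nat) (D2::nat) (N::nat) (x1::nat \<Rightarrow> nat \<Rightarrow> real) (x2::nat \<Rightarrow> nat \<Rightarrow> real)
           (\<sigma>::real) (i::nat) (K::nat) (S1::nat set) (S2::nat set) (j::nat) (k::nat).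
     D1 \<ge> 1 \<and> D2 \<ge> 1 \<and> \<sigma> > 0 \<and> i < N \<and>
     knn_cand N D1 x1 K i S1 \<and> knn_cand N D2 x2 K i S2 \<and>
     j \<in> S1 \<union> S2 \<and> k \<in> S1 \<union> S2 \<and> j \<noteq> k \<and>
     k \<notin> nnk (gkernel \<sigma> D1 x1) i S1 \<and> k \<notin> nnk (gkernel \<sigma> D2 x2) i S2 \<and>
     gkernel \<sigma> D1 x1 i k < gkernel \<sigma> D1 x1 i j * gkernel \<sigma> D1 x1 j k \<and>
     gkernel \<sigma> D2 x2 i k > gkernel \<sigma> D2 x2 i j * gkernel \<sigma> D2 x2 j k \<and>
     k \<in> nnk (gkernel \<sigma> (D1 + D2) (concat_data D1 x1 x2)) i (S1 \<union> S2)"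
proof -
  have s1: "sqdist 1 (X1 a) (X1 b) = (X1 a 0 - X1 b 0)^2" for a b by (simp add: sqdist_def)
  have s2: "sqdist 1 (X2 a) (X2 b) = (X2 a 0 - X2 b 0)^2" for a b by (simp add: sqdist_def)
  have s3: "sqdist 2 (concat_data 1 X1 X2 a) (concat_data 1 X1 X2 b) =
     (X1 a 0 - X1 b 0)^2 + (X2 a 0 - X2 b 0)^2" for a b
    by (simp add: sqdist_def numeral_2_eq_2 concat_data_def)
  have k1: "knn_cand 4 1 X1 2 0 {1,2}"
    unfolding knn_cand_def ed lt4 by (auto simp: sqdist_def X1_def)
  have k2: "knn_cand 4 1 X2 2 0 {3,2}"
    unfolding knn_cand_def ed lt4 by (auto simp: sqdist_def X2_def)
  have n1: "2 \<notin> nnk (gkernel 1 1 X1) 0 {1,2}"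
    unfolding nnk_def gk1 by (auto simp: sqdist_def X1_def exp_add[symmetric])
  have n2: "2 \<notin> nnk (gkernel 1 1 X2) 0 {3,2}"
    unfolding nnk_def gk1 by (auto simp: sqdist_def X2_def exp_add[symmetric] intro!: bexI[of _ 3])
  have e1: "gkernel 1 1 X1 0 2 < gkernel 1 1 X1 0 1 * gkernel 1 1 X1 1 2"
    unfolding gk1 by (simp add: sqdist_def X1_def exp_add[symmetric])
  have e2: "gkernel 1 1 X2 0 2 > gkernel 1 1 X2 0 1 * gkernel 1 1 X2 1 2"
    unfolding gk1 by (simp add: sqdist_def X2_def exp_add[symmetric])
  have n3: "2 \<in> nnk (gkernel 1 (1+1) (concat_data 1 X1 X2)) 0 ({1,2} \<union> {3,2})"
    unfolding nnk_def gk1 by (auto simp: sqdist_def concat_data_def X1_def X2_def exp_add[symmetric])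
  show ?thesis
    apply (rule exI[of _ 1], rule exI[of _ 1], rule exI[of _ 4], rule exI[of _ X1], rule exI[of _ X2],
       rule exI[of _ 1], rule exI[of _ 0], rule exI[of _ 2], rule exI[of _ "{1,2}"], rule exI[of _ "{3,2}"],
       rule exI[of _ 1], rule exI[of _ 2])
    using k1 k2 n1 n2 e1 e2 n3 by simp
qed

end
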